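(* Let $A=\{a_1,\ldots,a_k\}$ be a set of $k$ distinct positive integers with $a_1<a_2<\cdots<a_k$. If a tree $T$ has order at most $$\left(\sum_{i=1}^k a_i\right)+a_k-1+\left\lfloor\frac{k^2-3k+2}{6}\right\rfloor,$$ then $T$ is $A$-burnable.
   Context: For a vertex $u$ of a graph and an integer $m\ge 0$, $N_m[u]$ denotes the set of vertices at distance at most $m$ from $u$. For a set $A$ of positive integers $a_1,\ldots,a_k$, a graph $G$ is called $A$-burnable if there exist $k$ vertices $v_1,\ldots,v_k$ of $G$ (not necessarily distinct) such that $V(G)\subseteq\bigcup_{i=1}^k N_{a_i-1}[v_i]$. The order of a graph is its number of vertices. *)

theory Defs
  imports Main
begin

definition simple_graph :: "'a set \<Rightarrow> ('a \<Rightarrow> 'a \<Rightarrow> bool) \<Rightarrow> bool" where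
  "simple_graph V E \<longleftrightarrow> finite V \<and>
     (\<forall>u v. E u v \<longrightarrow> u \<in> V \<and> v \<in> V) \<and>
     (\<forall>u v. E u v \<longrightarrow> E v u) \<and> (\<forall>u. \<not> E u u)"

inductive walk :: "('a \<Rightarrow> 'a \<Rightarrow> bool) \<Rightarrow> 'a \<Rightarrow> 'a \<Rightarrow> nat \<Rightarrow> bool" for E where
  walk_refl: "walk E u u 0"
| walk_step: "E u w \<Longrightarrow> walk E w v n \<Longrightarrow> walk E u v (Suc n)"

definition connected_graph :: "'a set \<Rightarrow> ('a \<Rightarrow> 'a \<Rightarrow> bool) \<Rightarrow> bool" where
  "connected_graph V E \<longleftrightarrow> V \<noteq> {} \<and> (\<forall>u\<in>V. \<forall>v\<in>V. \<exists>n. walk E u v n)"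

definition is_cycle :: "('a \<Rightarrow> 'a \<Rightarrow> bool) \<Rightarrow> 'a list \<Rightarrow> bool" where
  "is_cycle E cs \<longleftrightarrow> length cs \<ge> 3 \<and> distinct cs \<and>
     (\<forall>i. Suc i < length cs \<longrightarrow> E (cs ! i) (cs ! Suc i)) \<and> E (last cs) (hd cs)"

definition is_tree :: "'a set \<Rightarrow> ('a \<Rightarrow> 'a \<Rightarrow> bool) \<Rightarrow> bool" where
  "is_tree V E \<longleftrightarrow> simple_graph V E \<and> connected_graph V E \<and> (\<nexists>cs. is_cycle E cs)"

definition closed_nbhd :: "'a set \<Rightarrow> ('a \<Rightarrow> 'a \<Rightarrow> bool) \<Rightarrow> nat \<Rightarrow> 'a \<Rightarrow> 'a set" where
  "closed_nbhd V E m u = {v \<in> V. \<exists>n \<le> m. walk E u v n}"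

definition burnable :: "nat set \<Rightarrow> 'a set \<Rightarrow> ('a \<Rightarrow> 'a \<Rightarrow> bool) \<Rightarrow> bool" where
  "burnable A V E \<longleftrightarrow> (\<exists>f. (\<forall>a\<in>A. f a \<in> V) \<and> V \<subseteq> (\<Union>a\<in>A. closed_nbhd V E (a - 1) (f a)))"

end

theory Submission
  imports Defs
begin


lemma walk_trans: "walk E u v m \<Longrightarrow> walk E v w n \<Longrightarrow> walk E u w (m+n)"
  by (induction rule: walk.induct) (auto intro: walk.intros)

lemma walk_snoc: "walk E u v n \<Longrightarrow> E v w \<Longrightarrow> walk E u w (Suc n)"
  using walk_trans[of E u v n w 1] by (simp add: walk.intros)

lemma walk_sym: assumes "\<forall>a b. E a b \<longrightarrow> E b a" shows "walk E u v n \<Longrightarrow> walk E v u n"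
proof (induction rule: walk.induct)
  case (walk_refl u) then show ?case by (rule walk.walk_refl)
next
  case (walk_step u w v n)
  then show ?case using walk_snoc[of E v w n u] assms by blast
qed

lemma walk_mono: "walk E u v n \<Longrightarrow> (\<And>a b. E a b \<Longrightarrow> E' a b) \<Longrightarrow> walk E' u v n"
  by (induction rule: walk.induct) (auto intro: walk.intros)

lemma walk_0: "walk E u v 0 \<Longrightarrow> u = v"
  by (erule walk.cases) auto

lemma walk_fun: "walk E u v n \<Longrightarrow> \<exists>g. g 0 = u \<and> g n = v \<and> (\<forall>i<n. E (g i) (g (Suc i)))"
proof (induction rule: walk.induct)
  case (walk_refl u) then show ?case by (rule exI[of _ "\<lambda>_. u"]) simp
next
  case (walk_step u w v n)
  then obtain g where g: "g 0 = w" "g n = v" "\<forall>i<n. E (g i) (g (Suc i))" by blast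
  let ?h = "\<lambda>i. case i of 0 \<Rightarrow> u | Suc j \<Rightarrow> g j"
  have "\<forall>i<Suc n. E (?h i) (?h (Suc i))"
  proof (intro allI impI)
    fix i assume "i < Suc n"
    then show "E (?h i) (?h (Suc i))" using g walk_step(1) by (cases i) auto
  qed
  then show ?case using g by (intro exI[of _ ?h]) auto
qed

lemma fun_walk: "(\<forall>i<n. E (g i) (g (Suc i))) \<Longrightarrow> i \<le> j \<Longrightarrow> j \<le> n \<Longrightarrow> walk E (g i) (g j) (j - i)"
proof (induction j)
  case 0 then show ?case by (simp add: walk.intros)
next
  case (Suc j)
  show ?case
  proof (cases "i = Suc j")
    case True then show ?thesis by (simp add: walk.intros)
  next
    case False
    then have "walk E (g i) (g j) (j - i)" using Suc by auto
    moreover have "E (g j) (g (Suc j))" using Suc by auto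
    ultimately show ?thesis using walk_snoc[of E "g i" "g j" "j - i" "g (Suc j)"] False Suc.prems(2) by (simp add: Suc_diff_le)
  qed
qed

definition gd :: "('a \<Rightarrow> 'a \<Rightarrow> bool) \<Rightarrow> 'a \<Rightarrow> 'a \<Rightarrow> nat" where
  "gd E u v = (LEAST n. walk E u v n)"

lemma gd_walk: "walk E u v n \<Longrightarrow> walk E u v (gd E u v)"
  unfolding gd_def by (rule LeastI)

lemma gd_le: "walk E u v n \<Longrightarrow> gd E u v \<le> n"
  unfolding gd_def by (rule Least_le)

locale cg =
  fixes V :: "'a set" and E :: "'a \<Rightarrow> 'a \<Rightarrow> bool"
  assumes simple: "simple_graph V E" and conn: "connected_graph V E"
begin

lemma finV: "finite V" using simple unfolding simple_graph_def by auto
lemma symE: "\<forall>a b. E a b \<longrightarrow> E b a" using simple unfolding simple_graph_def by auto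
lemma EV: "E a b \<Longrightarrow> a \<in> V \<and> b \<in> V" using simple unfolding simple_graph_def by auto
lemma Vne: "V \<noteq> {}" using conn unfolding connected_graph_def by auto

lemma walk_in_V: "walk E u v n \<Longrightarrow> u \<in> V \<Longrightarrow> v \<in> V"
  by (induction rule: walk.induct) (auto dest: EV)

lemma ex_walk: "u \<in> V \<Longrightarrow> v \<in> V \<Longrightarrow> \<exists>n. walk E u v n"
  using conn unfolding connected_graph_def by auto

lemma gdw: "u \<in> V \<Longrightarrow> v \<in> V \<Longrightarrow> walk E u v (gd E u v)"
  using ex_walk gd_walk by metis

lemma gd_tri: "u \<in> V \<Longrightarrow> v \<in> V \<Longrightarrow> w \<in> V \<Longrightarrow> gd E u w \<le> gd E u v + gd E v w"
  using gd_le[OF walk_trans[OF gdw[of u v] gdw[of v w]]] by simp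

lemma gd_sym: "u \<in> V \<Longrightarrow> v \<in> V \<Longrightarrow> gd E u v = gd E v u"
  using gd_le[OF walk_sym[OF symE gdw[of u v]]] gd_le[OF walk_sym[OF symE gdw[of v u]]] by simp

lemma gd_self[simp]: "gd E u u = 0"
  using gd_le[OF walk.walk_refl[of E u]] by simp

lemma gd_0: "u \<in> V \<Longrightarrow> v \<in> V \<Longrightarrow> gd E u v = 0 \<Longrightarrow> u = v"
  using gdw walk_0 by metis

lemma nbhdI: "y \<in> V \<Longrightarrow> c \<in> V \<Longrightarrow> gd E c y \<le> m \<Longrightarrow> y \<in> closed_nbhd V E m c"
  unfolding closed_nbhd_def using gdw by blast

lemma geod:
  assumes "u \<in> V" "w \<in> V"
  obtains g where "g 0 = u" "g (gd E u w) = w" "\<forall>i<gd E u w. E (g i) (g (Suc i))"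
    "\<And>i. i \<le> gd E u w \<Longrightarrow> g i \<in> V"
    "\<And>i. i \<le> gd E u w \<Longrightarrow> gd E u (g i) = i"
    "\<And>i. i \<le> gd E u w \<Longrightarrow> gd E (g i) w = gd E u w - i"
    "\<And>i j. i \<le> j \<Longrightarrow> j \<le> gd E u w \<Longrightarrow> gd E (g i) (g j) \<le> j - i"
proof -
  let ?n = "gd E u w"
  obtain g where g: "g 0 = u" "g ?n = w" "\<forall>i<?n. E (g i) (g (Suc i))"
    using walk_fun[OF gdw[OF assms]] by blast
  have W: "\<And>i j. i \<le> j \<Longrightarrow> j \<le> ?n \<Longrightarrow> walk E (g i) (g j) (j - i)"
    using fun_walk[of ?n E g] g(3) by blast
  have inV: "\<And>i. i \<le> ?n \<Longrightarrow> g i \<in> V"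
  proof -
    fix i assume "i \<le> ?n"
    then have "walk E u (g i) i" using W[of 0 i] g(1) by simp
    then show "g i \<in> V" using walk_in_V assms(1) by blast
  qed
  have le: "\<And>i j. i \<le> j \<Longrightarrow> j \<le> ?n \<Longrightarrow> gd E (g i) (g j) \<le> j - i"
  proof -
    fix i j assume "i \<le> j" "j \<le> ?n"
    then show "gd E (g i) (g j) \<le> j - i" using gd_le[OF W[of i j]] by simp
  qed
  have a: "\<And>i. i \<le> ?n \<Longrightarrow> gd E u (g i) \<le> i"
  proof -
    fix i assume "i \<le> ?n" then show "gd E u (g i) \<le> i" using le[of 0 i] g(1) by simp
  qed
  have b: "\<And>i. i \<le> ?n \<Longrightarrow> gd E (g i) w \<le> ?n - i"
  proof -
    fix i assume "i \<le> ?n" then show "gd E (g i) w \<le> ?n - i" using le[of i ?n] g(2) by simp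
  qed
  have c: "\<And>i. i \<le> ?n \<Longrightarrow> ?n \<le> gd E u (g i) + gd E (g i) w"
    using gd_tri[OF assms(1) inV assms(2)] by blast
  have d: "\<And>i. i \<le> ?n \<Longrightarrow> gd E u (g i) = i"
  proof -
    fix i assume i: "i \<le> ?n" show "gd E u (g i) = i" using a[OF i] b[OF i] c[OF i] i by linarith
  qed
  have e: "\<And>i. i \<le> ?n \<Longrightarrow> gd E (g i) w = ?n - i"
  proof -
    fix i assume i: "i \<le> ?n" show "gd E (g i) w = ?n - i" using a[OF i] b[OF i] c[OF i] i by linarith
  qed
  show ?thesis by (rule that[OF g inV d e le])
qed

end


context cg
begin

definition sub :: "'a \<Rightarrow> 'a \<Rightarrow> 'a set" where
  "sub \<rho> v = {y \<in> V. gd E \<rho> y = gd E \<rho> v + gd E v y}"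

lemma sub_V: "sub \<rho> v \<subseteq> V" unfolding sub_def by auto

lemma sub_trans:
  assumes "\<rho> \<in> V" "u \<in> V" "v \<in> sub \<rho> u" "z \<in> sub \<rho> v"
  shows "z \<in> sub \<rho> u"
proof -
  have v: "v \<in> V" and z: "z \<in> V" using assms sub_V by auto
  have "gd E u z \<le> gd E u v + gd E v z" using gd_tri[OF assms(2) v z] .
  moreover have "gd E \<rho> z \<le> gd E \<rho> u + gd E u z" using gd_tri[OF assms(1) assms(2) z] .
  ultimately show ?thesis using assms(3,4) z unfolding sub_def by auto
qed

lemma rho_notin: "\<rho> \<in> V \<Longrightarrow> v \<in> V \<Longrightarrow> v \<noteq> \<rho> \<Longrightarrow> \<rho> \<notin> sub \<rho> v"
  unfolding sub_def using gd_0 by fastforce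

lemma removal:
  assumes rho: "\<rho> \<in> V" and v: "v \<in> V" "v \<noteq> \<rho>"
  defines "V' \<equiv> V - sub \<rho> v"
  defines "E' \<equiv> \<lambda>a b. E a b \<and> a \<in> V' \<and> b \<in> V'"
  shows "cg V' E'"
proof -
  have rV: "\<rho> \<in> V'" using rho_notin[OF rho v] rho unfolding V'_def by auto
  have sg: "simple_graph V' E'"
    unfolding simple_graph_def
  proof (intro conjI allI impI)
    show "finite V'" using finV unfolding V'_def by simp
    fix a b assume "E' a b" then show "a \<in> V'" "b \<in> V'" unfolding E'_def by simp_all
  next
    fix a b assume "E' a b" then show "E' b a" using symE unfolding E'_def by simp
  next
    fix a show "\<not> E' a a" using simple unfolding E'_def simple_graph_def by simp
  qed
  have wk: "walk E' \<rho> y (gd E \<rho> y)" if y: "y \<in> V'" for y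
  proof -
    have yV: "y \<in> V" using y unfolding V'_def by auto
    obtain g where g: "g 0 = \<rho>" "g (gd E \<rho> y) = y" "\<forall>i<gd E \<rho> y. E (g i) (g (Suc i))"
      "\<And>i. i \<le> gd E \<rho> y \<Longrightarrow> g i \<in> V"
      "\<And>i. i \<le> gd E \<rho> y \<Longrightarrow> gd E \<rho> (g i) = i"
      "\<And>i. i \<le> gd E \<rho> y \<Longrightarrow> gd E (g i) y = gd E \<rho> y - i"
      "\<And>i j. i \<le> j \<Longrightarrow> j \<le> gd E \<rho> y \<Longrightarrow> gd E (g i) (g j) \<le> j - i"
      by (rule geod[OF rho yV], rule that)
    have inV': "g i \<in> V'" if i: "i \<le> gd E \<rho> y" for i
    proof (rule ccontr)
      assume "g i \<notin> V'"
      then have gs: "g i \<in> sub \<rho> v" using g(4)[OF i] unfolding V'_def by auto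
      then have a: "i = gd E \<rho> v + gd E v (g i)" using g(5)[OF i] unfolding sub_def by auto
      have b: "gd E v y \<le> gd E v (g i) + gd E (g i) y" using gd_tri[OF v(1) g(4)[OF i] yV] .
      have c: "gd E \<rho> y \<le> gd E \<rho> v + gd E v y" using gd_tri[OF rho v(1) yV] .
      have "gd E \<rho> y = gd E \<rho> v + gd E v y" using a b c g(6)[OF i] i by linarith
      then have "y \<in> sub \<rho> v" using yV unfolding sub_def by auto
      then show False using y unfolding V'_def by auto
    qed
    have "\<forall>i<gd E \<rho> y. E' (g i) (g (Suc i))"
      unfolding E'_def using g(3) inV' by auto
    from fun_walk[of "gd E \<rho> y" E' g 0 "gd E \<rho> y", OF this] show ?thesis using g by simp
  qed
  have symE': "\<forall>a b. E' a b \<longrightarrow> E' b a" using symE unfolding E'_def by auto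
  have "connected_graph V' E'"
    unfolding connected_graph_def
  proof (intro conjI ballI)
    show "V' \<noteq> {}" using rV by auto
    fix a b assume "a \<in> V'" "b \<in> V'"
    then show "\<exists>n. walk E' a b n"
      using walk_trans[OF walk_sym[OF symE' wk] wk] by blast
  qed
  then show ?thesis using sg by (simp add: cg_def)
qed

lemma nbhd_mono:
  assumes "V' \<subseteq> V" shows "closed_nbhd V' (\<lambda>a b. E a b \<and> a \<in> V' \<and> b \<in> V') m u \<subseteq> closed_nbhd V E m u"
  unfolding closed_nbhd_def using assms walk_mono[of "\<lambda>a b. E a b \<and> a \<in> V' \<and> b \<in> V'" _ _ _ E] by blast

end


context cg
begin

lemma sub_height:
  assumes rho: "\<rho> \<in> V" and u: "u \<in> V" and hmax: "\<And>y. y \<in> V \<Longrightarrow> gd E \<rho> y \<le> h"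
    and du: "gd E \<rho> u = h - R"
  shows "sub \<rho> u \<subseteq> closed_nbhd V E R u"
proof
  fix y assume y: "y \<in> sub \<rho> u"
  then have yV: "y \<in> V" and eq: "gd E \<rho> y = gd E \<rho> u + gd E u y" unfolding sub_def by auto
  have "gd E u y \<le> R" using eq hmax[OF yV] du by linarith
  then show "y \<in> closed_nbhd V E R u" using nbhdI[OF yV u] by blast
qed

lemma step:
  assumes rho: "\<rho> \<in> V" and dr: "d \<le> r" and d2: "2*d \<le> r+1" and rR: "r + d \<le> R"
    and notall: "\<not> V \<subseteq> closed_nbhd V E R \<rho>"
  shows "\<exists>c\<in>V. \<exists>v\<in>V. v \<noteq> \<rho> \<and>
     ((sub \<rho> v \<subseteq> closed_nbhd V E r c \<and> r + 1 + d \<le> card (sub \<rho> v)) \<or>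
      (sub \<rho> v \<subseteq> closed_nbhd V E R c \<and> R + 1 + d \<le> card (sub \<rho> v)))"
proof -
  define h where "h = Max (gd E \<rho> ` V)"
  have hmax: "\<And>y. y \<in> V \<Longrightarrow> gd E \<rho> y \<le> h" unfolding h_def using finV by simp
  have "h \<in> gd E \<rho> ` V" unfolding h_def using Max_in[of "gd E \<rho> ` V"] finV Vne by simp
  then obtain x where xV: "x \<in> V" and hx: "gd E \<rho> x = h" by (metis imageE)
  have hR: "R < h"
  proof (rule ccontr)
    assume "\<not> R < h"
    then have "V \<subseteq> closed_nbhd V E R \<rho>" using hmax nbhdI[OF _ rho] by (meson order.trans not_less subsetI)
    then show False using notall by simp
  qed
  have hx': "gd E x \<rho> = h" using gd_sym[OF xV rho] hx by simp
  obtain X where X: "X 0 = x" "X (gd E x \<rho>) = \<rho>" "\<forall>i<gd E x \<rho>. E (X i) (X (Suc i))"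
      "\<And>i. i \<le> gd E x \<rho> \<Longrightarrow> X i \<in> V"
      "\<And>i. i \<le> gd E x \<rho> \<Longrightarrow> gd E x (X i) = i"
      "\<And>i. i \<le> gd E x \<rho> \<Longrightarrow> gd E (X i) \<rho> = gd E x \<rho> - i"
      "\<And>i j. i \<le> j \<Longrightarrow> j \<le> gd E x \<rho> \<Longrightarrow> gd E (X i) (X j) \<le> j - i"
    by (rule geod[OF xV rho], rule that)
  have XV: "\<And>i. i \<le> h \<Longrightarrow> X i \<in> V" using X(4) hx' by simp
  have Xd: "\<And>i. i \<le> h \<Longrightarrow> gd E \<rho> (X i) = h - i"
    using X(6) hx' gd_sym[OF _ rho] XV by (metis)
  have Xx: "\<And>i. i \<le> h \<Longrightarrow> gd E x (X i) = i" using X(5) hx' by simp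
  have Xij: "\<And>i j. i \<le> j \<Longrightarrow> j \<le> h \<Longrightarrow> gd E (X i) (X j) \<le> j - i" using X(7) hx' by simp
  have Xji: "\<And>i j. i \<le> j \<Longrightarrow> j \<le> h \<Longrightarrow> gd E (X j) (X i) \<le> j - i"
    using Xij gd_sym XV by (metis order.trans)
  have injX: "inj_on X {0..h}"
    by (rule inj_onI) (metis Xx atLeastAtMost_iff)
  have Xsub: "X s \<in> sub \<rho> (X t)" if "s \<le> t" "t \<le> h" for s t
  proof -
    have a: "gd E \<rho> (X s) \<le> gd E \<rho> (X t) + gd E (X t) (X s)"
      using gd_tri[OF rho XV XV] that by simp
    have b: "gd E (X t) (X s) \<le> t - s" using Xji that by simp
    show ?thesis unfolding sub_def using a b Xd[of s] Xd[of t] that XV[of s] by simp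
  qed
  define v where "v = X (r + d)"
  have vV: "v \<in> V" using XV hR rR unfolding v_def by simp
  have dv: "gd E \<rho> v = h - (r + d)" using Xd hR rR unfolding v_def by simp
  have vrho: "v \<noteq> \<rho>"
  proof
    assume "v = \<rho>" then have "gd E \<rho> v = 0" by simp
    with dv hR rR show False by linarith
  qed
  show ?thesis
  proof (cases "\<forall>y\<in>sub \<rho> v. gd E (X r) y \<le> r")
    case True
    have XrV: "X r \<in> V" using XV hR rR by simp
    have cov: "sub \<rho> v \<subseteq> closed_nbhd V E r (X r)"
    proof
      fix y assume "y \<in> sub \<rho> v"
      then show "y \<in> closed_nbhd V E r (X r)" using True nbhdI[OF _ XrV] sub_V by blast
    qed
    have "X ` {0..r+d} \<subseteq> sub \<rho> v" using Xsub hR rR unfolding v_def by auto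
    moreover have "card (X ` {0..r+d}) = r + d + 1"
      using inj_on_subset[OF injX, of "{0..r+d}"] card_image hR rR by fastforce
    moreover have "finite (sub \<rho> v)" using finite_subset[OF sub_V finV] .
    ultimately have "r + d + 1 \<le> card (sub \<rho> v)" by (metis card_mono)
    then show ?thesis using cov vV vrho XV hR rR by (intro bexI[of _ "X r"] bexI[of _ v]) auto
  next
    case False
    then obtain y where ysub: "y \<in> sub \<rho> v" and yfar: "r < gd E (X r) y" by (auto simp: not_le)
    have yV: "y \<in> V" using ysub sub_V by auto
    define e where "e = gd E v y"
    have dy: "gd E \<rho> y = h - (r + d) + e" using ysub dv unfolding sub_def e_def by simp
    obtain w where w: "w 0 = v" "w (gd E v y) = y" "\<forall>i<gd E v y. E (w i) (w (Suc i))"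
      "\<And>i. i \<le> gd E v y \<Longrightarrow> w i \<in> V"
      "\<And>i. i \<le> gd E v y \<Longrightarrow> gd E v (w i) = i"
      "\<And>i. i \<le> gd E v y \<Longrightarrow> gd E (w i) y = gd E v y - i"
      "\<And>i j. i \<le> j \<Longrightarrow> j \<le> gd E v y \<Longrightarrow> gd E (w i) (w j) \<le> j - i"
      by (rule geod[OF vV yV], rule that)
    have wV: "\<And>i. i \<le> e \<Longrightarrow> w i \<in> V" using w(4) e_def by simp
    have wv: "\<And>i. i \<le> e \<Longrightarrow> gd E v (w i) = i" using w(5) e_def by simp
    have wy: "\<And>i. i \<le> e \<Longrightarrow> gd E (w i) y = e - i" using w(6) e_def by simp
    have wd: "gd E \<rho> (w i) = h - (r + d) + i" if i: "i \<le> e" for i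
    proof -
      have a: "gd E \<rho> (w i) \<le> gd E \<rho> v + i" using gd_tri[OF rho vV wV[OF i]] wv[OF i] by simp
      have b: "gd E \<rho> y \<le> gd E \<rho> (w i) + (e - i)" using gd_tri[OF rho wV[OF i] yV] wy[OF i] by simp
      show ?thesis using a b dy dv i by linarith
    qed
    have wsub: "w i \<in> sub \<rho> v" if i: "i \<le> e" for i
      unfolding sub_def using wd[OF i] wv[OF i] dv wV[OF i] by simp
    define P where "P = {i. i \<le> e \<and> i \<le> r + d \<and> w i = X (r + d - i)}"
    have P0: "0 \<in> P" unfolding P_def using w(1) v_def by simp
    have finP: "finite P" unfolding P_def by simp
    define p where "p = Max P"
    have pP: "p \<in> P" unfolding p_def using Max_in[OF finP] P0 by blast
    have pmax: "\<And>i. i \<in> P \<Longrightarrow> i \<le> p" unfolding p_def using finP by simp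
    have pe: "p \<le> e" and prd: "p \<le> r + d" and wp: "w p = X (r + d - p)" using pP unfolding P_def by auto
    have ywp: "gd E (w p) y = e - p" using wy pe by simp
    have pd: "p \<le> d"
    proof (rule ccontr)
      assume "\<not> p \<le> d"
      define s where "s = r + d - p"
      have sr: "s < r" using \<open>\<not> p \<le> d\<close> prd unfolding s_def by linarith
      have "e - p \<le> s" using wd[OF pe] ywp dy hmax[OF yV] wp Xd[of s] hR rR unfolding s_def by linarith
      moreover have "gd E (X r) y \<le> gd E (X r) (X s) + gd E (X s) y"
        using gd_tri[OF XV[of r] XV[of s] yV] hR rR sr by simp
      moreover have "gd E (X r) (X s) \<le> r - s" using Xji[of s r] sr hR rR by simp
      moreover have "gd E (X s) y = e - p" using ywp wp unfolding s_def by simp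
      ultimately have "gd E (X r) y \<le> r" using sr by linarith
      then show False using yfar by simp
    qed
    have "gd E (X r) y \<le> gd E (X r) (X (r + d - p)) + gd E (X (r + d - p)) y"
      using gd_tri[OF XV[of r] XV[of "r + d - p"] yV] hR rR by simp
    moreover have "gd E (X r) (X (r + d - p)) \<le> d - p" using Xij[of r "r + d - p"] pd hR rR by simp
    moreover have "gd E (X (r + d - p)) y = e - p" using ywp wp by simp
    ultimately have ep: "r + 1 - d \<le> e - p" using yfar pd by linarith
    define u where "u = X R"
    have uV: "u \<in> V" using XV hR unfolding u_def by simp
    have du: "gd E \<rho> u = h - R" using Xd hR unfolding u_def by simp
    have urho: "u \<noteq> \<rho>"
    proof
      assume "u = \<rho>" then have "gd E \<rho> u = 0" by simp
      with du hR show False by linarith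
    qed
    have vu: "v \<in> sub \<rho> u" using Xsub rR hR unfolding u_def v_def by simp
    have cov: "sub \<rho> u \<subseteq> closed_nbhd V E R u" using sub_height[OF rho uV hmax du] .
    have S1: "X ` {0..R} \<subseteq> sub \<rho> u" using Xsub hR unfolding u_def by auto
    have S2: "w ` {p<..e} \<subseteq> sub \<rho> u" using wsub sub_trans[OF rho uV vu] by auto
    have disj: "X ` {0..R} \<inter> w ` {p<..e} = {}"
    proof (rule ccontr)
      assume "X ` {0..R} \<inter> w ` {p<..e} \<noteq> {}"
      then obtain s i where s: "s \<le> R" and i: "p < i" "i \<le> e" and eq: "w i = X s" by (auto simp: eq_commute)
      have "gd E \<rho> (w i) = gd E \<rho> (X s)" using eq by simp
      then have "h - (r + d) + i = h - s" using wd[OF i(2)] Xd[of s] s hR by simp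
      then have "i \<le> r + d" "s = r + d - i" using hR rR s by linarith+
      then have "i \<in> P" unfolding P_def using i eq by simp
      then show False using pmax i by fastforce
    qed
    have c1: "card (X ` {0..R}) = R + 1"
      using inj_on_subset[OF injX, of "{0..R}"] card_image hR by fastforce
    have injw: "inj_on w {p<..e}" by (rule inj_onI) (metis wv greaterThanAtMost_iff)
    have c2: "card (w ` {p<..e}) = e - p" using card_image[OF injw] by simp
    have "card (X ` {0..R} \<union> w ` {p<..e}) = R + 1 + (e - p)"
      using card_Un_disjoint[OF _ _ disj] c1 c2 by simp
    moreover have "finite (sub \<rho> u)" using finite_subset[OF sub_V finV] .
    ultimately have "R + 1 + (e - p) \<le> card (sub \<rho> u)" using S1 S2 by (metis Un_least card_mono)
    then have "R + 1 + d \<le> card (sub \<rho> u)" using ep d2 by linarith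
    then show ?thesis using cov uV urho by blast
  qed
qed

end


context cg
begin

lemma center:
  assumes a1: "1 \<le> a" and cardV: "card V + 1 \<le> 2 * a"
  shows "\<exists>c\<in>V. V \<subseteq> closed_nbhd V E (a - 1) c"
proof -
  define ecc where "ecc u = Max (gd E u ` V)" for u
  have eccge: "\<And>u y. y \<in> V \<Longrightarrow> gd E u y \<le> ecc u" unfolding ecc_def using finV by simp
  have eccin: "\<And>u. \<exists>y\<in>V. gd E u y = ecc u"
  proof -
    fix u have "ecc u \<in> gd E u ` V" unfolding ecc_def using Max_in finV Vne by simp
    then show "\<exists>y\<in>V. gd E u y = ecc u" by (metis imageE)
  qed
  have "Min (ecc ` V) \<in> ecc ` V" using Min_in finV Vne by simp
  then obtain \<rho> where rho: "\<rho> \<in> V" and rmin: "ecc \<rho> = Min (ecc ` V)" by (metis imageE)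
  have emin: "\<And>u. u \<in> V \<Longrightarrow> ecc \<rho> \<le> ecc u" using rmin finV by simp
  define e where "e = ecc \<rho>"
  show ?thesis
  proof (cases "e \<le> a - 1")
    case True
    have "V \<subseteq> closed_nbhd V E (a - 1) \<rho>"
    proof
      fix y assume y: "y \<in> V"
      have "gd E \<rho> y \<le> a - 1" using eccge[OF y, of \<rho>] True e_def by simp
      then show "y \<in> closed_nbhd V E (a - 1) \<rho>" using nbhdI[OF y rho] by simp
    qed
    then show ?thesis using rho by blast
  next
    case False
    then have ea: "a \<le> e" using a1 by linarith
    obtain y where yV: "y \<in> V" and ye: "gd E \<rho> y = e" using eccin e_def by blast
    obtain g where g: "g 0 = \<rho>" "g (gd E \<rho> y) = y" "\<forall>i<gd E \<rho> y. E (g i) (g (Suc i))"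
      "\<And>i. i \<le> gd E \<rho> y \<Longrightarrow> g i \<in> V"
      "\<And>i. i \<le> gd E \<rho> y \<Longrightarrow> gd E \<rho> (g i) = i"
      "\<And>i. i \<le> gd E \<rho> y \<Longrightarrow> gd E (g i) y = gd E \<rho> y - i"
      "\<And>i j. i \<le> j \<Longrightarrow> j \<le> gd E \<rho> y \<Longrightarrow> gd E (g i) (g j) \<le> j - i"
      by (rule geod[OF rho yV], rule that)
    have e1: "1 \<le> e" using ea a1 by simp
    define c where "c = g 1"
    have cV: "c \<in> V" using g(4) e1 ye unfolding c_def by simp
    have cr: "gd E c \<rho> = 1" using g(5)[of 1] gd_sym[OF rho cV] e1 ye unfolding c_def by simp
    obtain z where zV: "z \<in> V" and zc: "gd E c z = ecc c" using eccin by blast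
    have cz: "e \<le> gd E c z" using zc emin[OF cV] e_def by simp
    define L where "L = gd E \<rho> z"
    have Le: "L \<le> e" using eccge[OF zV, of \<rho>] e_def L_def by simp
    have "gd E c z \<le> gd E c \<rho> + gd E \<rho> z" using gd_tri[OF cV rho zV] .
    then have L1: "e \<le> L + 1" using cz cr L_def by simp
    obtain u where u: "u 0 = \<rho>" "u (gd E \<rho> z) = z" "\<forall>i<gd E \<rho> z. E (u i) (u (Suc i))"
      "\<And>i. i \<le> gd E \<rho> z \<Longrightarrow> u i \<in> V"
      "\<And>i. i \<le> gd E \<rho> z \<Longrightarrow> gd E \<rho> (u i) = i"
      "\<And>i. i \<le> gd E \<rho> z \<Longrightarrow> gd E (u i) z = gd E \<rho> z - i"
      "\<And>i j. i \<le> j \<Longrightarrow> j \<le> gd E \<rho> z \<Longrightarrow> gd E (u i) (u j) \<le> j - i"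
      by (rule geod[OF rho zV], rule that)
    have disj: "g ` {0..e} \<inter> u ` {1..L} = {}"
    proof (rule ccontr)
      assume "g ` {0..e} \<inter> u ` {1..L} \<noteq> {}"
      then obtain t where t1: "t \<in> g ` {0..e}" and t2: "t \<in> u ` {1..L}" by blast
      from t1 obtain j where j: "j \<le> e" and tj: "t = g j" by auto
      from t2 obtain i where i: "1 \<le> i" "i \<le> L" and ti: "t = u i" by auto
      have eq: "g j = u i" using tj ti by simp
      have gj: "gd E \<rho> (g j) = j" using g(5)[of j] j ye by simp
      have ui: "gd E \<rho> (u i) = i" using u(5)[of i] i L_def by simp
      have "j = i" using gj ui eq by simp
      have "gd E c z \<le> gd E c (g i) + gd E (g i) z" using gd_tri[OF cV g(4) zV] i Le ye by simp
      moreover have "gd E c (g i) \<le> i - 1" using g(7)[of 1 i] i Le ye unfolding c_def by simp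
      moreover have "gd E (g i) z = L - i" using u(6)[of i] eq \<open>j = i\<close> i L_def by simp
      ultimately have "gd E c z \<le> L - 1" using i by linarith
      then show False using cz Le e1 by linarith
    qed
    have injg: "inj_on g {0..e}" by (rule inj_onI) (metis g(5) ye atLeastAtMost_iff)
    have inju: "inj_on u {1..L}" by (rule inj_onI) (metis u(5) L_def atLeastAtMost_iff)
    have "card (g ` {0..e} \<union> u ` {1..L}) = (e + 1) + L"
      using card_Un_disjoint[OF _ _ disj] card_image[OF injg] card_image[OF inju] by simp
    moreover have "g ` {0..e} \<union> u ` {1..L} \<subseteq> V" using g(4) u(4) ye L_def by auto
    ultimately have "e + 1 + L \<le> card V" using card_mono[OF finV] by metis
    then have False using cardV ea L1 by linarith
    then show ?thesis by simp
  qed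
qed

end


definition bn :: "nat \<Rightarrow> nat" where "bn k = ((k - 1) * (k - 2)) div 6"

lemma prodmod: "((n + 1) * n) mod 6 \<in> {0, 2::nat}"
proof -
  obtain q s where ns: "n = 6 * q + s" and s: "s < 6" using div_mod_decomp[of n 6] by (metis mod_less_divisor zero_less_numeral mult.commute)
  have e: "(n + 1) * n = s * (s + 1) + 6 * (6 * q * q + 2 * q * s + q)"
    unfolding ns by (simp add: algebra_simps)
  have "((n + 1) * n) mod 6 = (s * (s + 1)) mod 6"
    unfolding e by (rule mod_mult_self2)
  moreover have "(s * (s + 1)) mod 6 \<in> {0, 2}"
    using s by (cases s; simp; rename_tac s1; case_tac s1; simp; rename_tac s2; case_tac s2; simp;
        rename_tac s3; case_tac s3; simp; rename_tac s4; case_tac s4; simp; rename_tac s5; case_tac s5; simp)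
  ultimately show ?thesis by simp
qed

lemma bn_step:
  assumes k: "2 \<le> k"
  shows "bn (k - 1) \<le> bn k" "3 * (bn k - bn (k - 1)) \<le> k - 1"
proof -
  define t where "t = k - 2"
  define P where "P = (t + 1) * t"
  define Q where "Q = t * (t - 1)"
  have k1: "k - 1 = t + 1" "k - 2 = t" "k - 1 - 1 = t" "k - 1 - 2 = t - 1" using k unfolding t_def by auto
  have bk: "bn k = P div 6" unfolding bn_def P_def k1(1) k1(2) ..
  have bk1: "bn (k - 1) = Q div 6" unfolding bn_def Q_def k1(3) k1(4) ..
  have PQ: "P = Q + 2 * t" unfolding P_def Q_def by (cases t) (auto simp: algebra_simps)
  have Pm: "P mod 6 \<le> 2" using prodmod[of t] unfolding P_def by auto
  have Qm: "Q mod 6 \<le> 2"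
  proof (cases t)
    case 0 then show ?thesis unfolding Q_def by simp
  next
    case (Suc t1)
    then have "Q = (t1 + 1) * t1" unfolding Q_def by simp
    then show ?thesis using prodmod[of t1] by auto
  qed
  have dP: "6 * (P div 6) + P mod 6 = P" by simp
  have dQ: "6 * (Q div 6) + Q mod 6 = Q" by simp
  show "bn (k - 1) \<le> bn k" unfolding bk bk1 using PQ by (simp add: div_le_mono)
  show "3 * (bn k - bn (k - 1)) \<le> k - 1" unfolding bk bk1 using dP dQ Pm Qm PQ k t_def by linarith
qed

lemma bn_int: "1 \<le> k \<Longrightarrow> (int k ^ 2 - 3 * int k + 2) div 6 = int (bn k)"
proof -
  assume k: "1 \<le> k"
  have "int k ^ 2 - 3 * int k + 2 = int ((k - 1) * (k - 2))"
  proof (cases "k = 1")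
    case True then show ?thesis by simp
  next
    case False
    then have "2 \<le> k" using k by simp
    then have a: "int (k - 1) = int k - 1" and b: "int (k - 2) = int k - 2" by (simp_all add: of_nat_diff)
    have "int ((k - 1) * (k - 2)) = int (k - 1) * int (k - 2)" by (rule of_nat_mult)
    also have "\<dots> = int k ^ 2 - 3 * int k + 2" unfolding a b by (simp add: power2_eq_square algebra_simps)
    finally show ?thesis by simp
  qed
  then show ?thesis unfolding bn_def by (simp add: zdiv_int)
qed



context cg
begin

lemma reduce:
  assumes rho: "\<rho> \<in> V" and v: "v \<in> V" "v \<noteq> \<rho>" and c: "c \<in> V" and j: "j \<in> A"
    and cov: "sub \<rho> v \<subseteq> closed_nbhd V E (j - 1) c"
    and b: "burnable (A - {j}) (V - sub \<rho> v) (\<lambda>a b. E a b \<and> a \<in> V - sub \<rho> v \<and> b \<in> V - sub \<rho> v)"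
  shows "burnable A V E"
proof -
  let ?V' = "V - sub \<rho> v"
  let ?E' = "\<lambda>a b. E a b \<and> a \<in> ?V' \<and> b \<in> ?V'"
  obtain f' where f'V: "\<forall>a\<in>A - {j}. f' a \<in> ?V'"
    and f'c: "?V' \<subseteq> (\<Union>a\<in>A - {j}. closed_nbhd ?V' ?E' (a - 1) (f' a))"
    using b unfolding burnable_def by blast
  define f where "f = f'(j := c)"
  have "\<forall>a\<in>A. f a \<in> V" using f'V c unfolding f_def by auto
  moreover have "V \<subseteq> (\<Union>a\<in>A. closed_nbhd V E (a - 1) (f a))"
  proof
    fix y assume y: "y \<in> V"
    show "y \<in> (\<Union>a\<in>A. closed_nbhd V E (a - 1) (f a))"
    proof (cases "y \<in> sub \<rho> v")
      case True
      then have "y \<in> closed_nbhd V E (j - 1) (f j)" using cov unfolding f_def by auto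
      then show ?thesis using j by blast
    next
      case False
      then have "y \<in> ?V'" using y by simp
      then obtain a where a: "a \<in> A - {j}" and ya: "y \<in> closed_nbhd ?V' ?E' (a - 1) (f' a)" using f'c by blast
      have "y \<in> closed_nbhd V E (a - 1) (f' a)" using nbhd_mono[of ?V'] ya by blast
      moreover have "f a = f' a" using a unfolding f_def by simp
      ultimately have "y \<in> closed_nbhd V E (a - 1) (f a)" by simp
      then show ?thesis using a by blast
    qed
  qed
  ultimately show ?thesis unfolding burnable_def by blast
qed

end

lemma main:
  "\<forall>(A::nat set) (V::'a set) E. finite A \<longrightarrow> A \<noteq> {} \<longrightarrow> 0 \<notin> A \<longrightarrow> card A = k \<longrightarrow> cg V E \<longrightarrow>
     card V + 1 \<le> \<Sum>A + Max A + bn k \<longrightarrow> burnable A V E"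
proof (induction k rule: less_induct)
  case (less k)
  show ?case
  proof (intro allI impI)
    fix A :: "nat set" and V :: "'a set" and E
    assume fA: "finite A" and ne: "A \<noteq> {}" and A0: "0 \<notin> A" and cA: "card A = k" and G: "cg V E"
      and cV: "card V + 1 \<le> \<Sum>A + Max A + bn k"
    interpret cg V E by (rule G)
    have "card A > 0" using fA ne by (simp add: card_gt_0_iff)
    then have k1: "1 \<le> k" using cA by simp
    show "burnable A V E"
    proof (cases "k = 1")
      case True
      then obtain a where Aa: "A = {a}" using cA card_1_singletonE by blast
      have a1: "1 \<le> a" using A0 Aa by (cases a) auto
      have "card V + 1 \<le> 2 * a" using cV Aa True by (simp add: bn_def)
      then obtain c where cV': "c \<in> V" and cov: "V \<subseteq> closed_nbhd V E (a - 1) c" using center a1 by blast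
      show ?thesis unfolding burnable_def Aa
        apply (rule exI[of _ "\<lambda>_. c"])
        using cV' cov by simp
    next
      case False
      then have k2: "2 \<le> k" using k1 by simp
      define M where "M = Max A"
      have MA: "M \<in> A" unfolding M_def using Max_in fA ne by simp
      define A1 where "A1 = A - {M}"
      have fA1: "finite A1" unfolding A1_def using fA by simp
      have cA1: "card A1 = k - 1" unfolding A1_def using cA MA fA by simp
      have ne1: "A1 \<noteq> {}" using cA1 k2 by auto
      define m2 where "m2 = Max A1"
      have m2A1: "m2 \<in> A1" unfolding m2_def using Max_in fA1 ne1 by simp
      have m2ge: "\<And>x. x \<in> A1 \<Longrightarrow> x \<le> m2" unfolding m2_def using fA1 by simp
      define d where "d = bn k - bn (k - 1)"
      have bnk: "bn k = bn (k - 1) + d" unfolding d_def using bn_step(1)[OF k2] by simp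
      have d3: "3 * d \<le> k - 1" unfolding d_def using bn_step(2)[OF k2] .
      define B where "B = {x \<in> A1. x + d \<le> m2}"
      have BA1: "B \<subseteq> A1" unfolding B_def by auto
      have fB: "finite B" using finite_subset[OF BA1 fA1] .
      have "A1 - B \<subseteq> {m2 - d<..m2}"
      proof
        fix x assume "x \<in> A1 - B"
        then have "x \<le> m2" "m2 < x + d" using m2ge unfolding B_def by auto
        moreover have "x \<noteq> 0" using \<open>x \<in> A1 - B\<close> A0 unfolding A1_def by (metis DiffD1)
        ultimately show "x \<in> {m2 - d<..m2}" by simp
      qed
      then have "card (A1 - B) \<le> card {m2 - d<..m2}" by (intro card_mono) auto
      then have "card (A1 - B) \<le> d" by simp
      moreover have "card (A1 - B) = card A1 - card B" using card_Diff_subset[OF fB BA1] .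
      moreover have "card B \<le> card A1" using card_mono[OF fA1 BA1] .
      ultimately have cB: "k - 1 - d \<le> card B" using cA1 by linarith
      have "1 \<le> card B" using cB d3 k2 by linarith
      then have neB: "B \<noteq> {}" by auto
      define a where "a = Max B"
      have aB: "a \<in> B" unfolding a_def using Max_in fB neB by simp
      have aA1: "a \<in> A1" using aB BA1 by auto
      have ad: "a + d \<le> m2" using aB unfolding B_def by simp
      have a1: "1 \<le> a" using aA1 A0 unfolding A1_def by (cases a) auto
      have "B \<subseteq> {1..a}"
      proof
        fix x assume x: "x \<in> B"
        then have "x \<le> a" unfolding a_def using fB by simp
        moreover have "x \<noteq> 0" using x BA1 A0 unfolding A1_def by auto
        ultimately show "x \<in> {1..a}" by simp
      qed
      then have "card B \<le> a" using card_mono[of "{1..a}" B] by simp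
      then have a2d: "2 * d \<le> a" using cB d3 by linarith
      have dr: "d \<le> a - 1"
      proof (cases "d = 0")
        case True then show ?thesis by simp
      next
        case False then show ?thesis using a2d a1 by linarith
      qed
      obtain \<rho> where rho: "\<rho> \<in> V" using Vne by blast
      have m21: "1 \<le> m2" using ad a1 by simp
      have m2A: "m2 \<in> A" using m2A1 unfolding A1_def by simp
      show ?thesis
      proof (cases "V \<subseteq> closed_nbhd V E (m2 - 1) \<rho>")
        case True
        show ?thesis unfolding burnable_def
          apply (rule exI[of _ "\<lambda>_. \<rho>"])
          using True m2A rho by blast
      next
        case False
        have s1: "2 * d \<le> a - 1 + 1" using a2d a1 by simp
        have s2: "a - 1 + d \<le> m2 - 1" using ad a1 by simp
        have "\<exists>c\<in>V. \<exists>v\<in>V. v \<noteq> \<rho> \<and>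
           ((sub \<rho> v \<subseteq> closed_nbhd V E (a - 1) c \<and> (a - 1) + 1 + d \<le> card (sub \<rho> v)) \<or>
            (sub \<rho> v \<subseteq> closed_nbhd V E (m2 - 1) c \<and> (m2 - 1) + 1 + d \<le> card (sub \<rho> v)))"
          by (rule step[OF rho dr s1 s2 False])
        then obtain c v where cV': "c \<in> V" and vV: "v \<in> V" and vr: "v \<noteq> \<rho>" and
          disj: "(sub \<rho> v \<subseteq> closed_nbhd V E (a - 1) c \<and> (a - 1) + 1 + d \<le> card (sub \<rho> v)) \<or>
            (sub \<rho> v \<subseteq> closed_nbhd V E (m2 - 1) c \<and> (m2 - 1) + 1 + d \<le> card (sub \<rho> v))"
          by blast
        have "\<exists>j. j \<in> A1 \<and> sub \<rho> v \<subseteq> closed_nbhd V E (j - 1) c \<and> j + d \<le> card (sub \<rho> v)"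
        proof (cases "sub \<rho> v \<subseteq> closed_nbhd V E (a - 1) c \<and> (a - 1) + 1 + d \<le> card (sub \<rho> v)")
          case True
          then show ?thesis using aA1 a1 by (intro exI[of _ a]) simp
        next
          case False
          then have "sub \<rho> v \<subseteq> closed_nbhd V E (m2 - 1) c \<and> (m2 - 1) + 1 + d \<le> card (sub \<rho> v)"
            using disj by blast
          then show ?thesis using m2A1 m21 by (intro exI[of _ m2]) simp
        qed
        then obtain j where jA1: "j \<in> A1"
          and cov: "sub \<rho> v \<subseteq> closed_nbhd V E (j - 1) c" and cs: "j + d \<le> card (sub \<rho> v)"
          by blast
        have jA: "j \<in> A" and jM: "j \<noteq> M" using jA1 unfolding A1_def by auto
        let ?A' = "A - {j}"
        let ?V' = "V - sub \<rho> v"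
        let ?E' = "\<lambda>a b. E a b \<and> a \<in> ?V' \<and> b \<in> ?V'"
        have G': "cg ?V' ?E'" using removal[OF rho vV vr] by simp
        have MA': "M \<in> ?A'" using MA jM by simp
        have maxA': "Max ?A' = M"
        proof (rule Max_eqI)
          show "finite ?A'" using fA by simp
          show "M \<in> ?A'" using MA' .
          fix y assume "y \<in> ?A'" then show "y \<le> M" unfolding M_def using fA by simp
        qed
        have sumA': "\<Sum>?A' = \<Sum>A - j" using sum_diff1_nat[of "\<lambda>x. x" A j] jA by simp
        have jS: "j \<le> \<Sum>A" using member_le_sum[of j A "\<lambda>x. x"] jA fA by simp
        have fs: "finite (sub \<rho> v)" using finite_subset[OF sub_V finV] .
        have cV'': "card ?V' = card V - card (sub \<rho> v)" using card_Diff_subset[OF fs sub_V] .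
        have csV: "card (sub \<rho> v) \<le> card V" using card_mono[OF finV sub_V] .
        have cA': "card ?A' = k - 1" using cA jA fA by simp
        have ineq: "card ?V' + 1 \<le> \<Sum>?A' + Max ?A' + bn (k - 1)"
          unfolding cV'' sumA' maxA' using cV bnk cs csV jS unfolding M_def by linarith
        have IH: "\<forall>(A::nat set) (V::'a set) E. finite A \<longrightarrow> A \<noteq> {} \<longrightarrow> 0 \<notin> A \<longrightarrow> card A = k - 1 \<longrightarrow> cg V E \<longrightarrow>
           card V + 1 \<le> \<Sum>A + Max A + bn (k - 1) \<longrightarrow> burnable A V E"
          using less.IH[of "k - 1"] k2 by simp
        have fA': "finite ?A'" using fA by simp
        have neA': "?A' \<noteq> {}" using MA' by blast
        have A0': "0 \<notin> ?A'" using A0 by simp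
        have "burnable ?A' ?V' ?E'"
          using IH[rule_format, OF fA' neA' A0' cA' G' ineq] .
        then show ?thesis using reduce[OF rho vV vr cV' jA cov] by simp
      qed
    qed
  qed
qed

theorem theorem3:
  fixes A :: "nat set" and V :: "'a set" and E :: "'a \<Rightarrow> 'a \<Rightarrow> bool"
  assumes "finite A" and "A \<noteq> {}" and "0 \<notin> A"
    and "is_tree V E"
    and "int (card V) \<le> int (\<Sum>A) + int (Max A) - 1
           + (int (card A) ^ 2 - 3 * int (card A) + 2) div 6"
  shows "burnable A V E"
proof -
  have G: "cg V E" using assms(4) unfolding is_tree_def cg_def by auto
  have "card A > 0" using assms(1,2) by (simp add: card_gt_0_iff)
  then have k1: "1 \<le> card A" by simp
  have "int (card V) \<le> int (\<Sum>A) + int (Max A) - 1 + int (bn (card A))"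
    using assms(5) bn_int[OF k1] by simp
  then have "card V + 1 \<le> \<Sum>A + Max A + bn (card A)" by linarith
  then show ?thesis using main[of "card A", rule_format, OF assms(1-3) refl G] by simp
qed


end
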